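(* Let $X$ be a scalable monoid over a ring $R$, $S$ a coherent system of unit elements for $X$, and $T\subseteq S$ a normal submonoid of $X$. Then $X/T$ is a scalable monoid, $[t]_T=[1_X]_T$ for every $t\in T$, and $S/T=\{[s]_T\mid s\in S\}$ is a coherent system of unit elements for $X/T$.
   Context: A scalable monoid over a (unital, associative) ring $R$ is a monoid $X$ (identity $1_X$, product written $xy$) together with a map $R\times X\to X$, $(\alpha,x)\mapsto\alpha\cdot x$, such that $1\cdot x=x$, $\alpha\cdot(\beta\cdot x)=\alpha\beta\cdot x$ and $\alpha\cdot(xy)=(\alpha\cdot x)y=x(\alpha\cdot y)$. In a scalable monoid $Y$, $x\sim y$ iff $\alpha\cdot x=\beta\cdot y$ for some $\alpha,\beta\in R$. A unit element is some $u\in Y$ such that every $x\sim u$ equals $\lambda\cdot u$ for some $\lambda\in R$, and $\lambda\cdot u=\lambda'\cdot u$ implies $\lambda=\lambda'$. A set $U\subseteq Y$ is dense if for every $x\in Y$ there is $u\in U$ with $u\sim x$, and sparse if $u\sim v$ implies $u=v$ for $u,v\in U$; a coherent system of unit elements for $Y$ is a submonoid of $Y$ that is a dense and sparse set of unit elements. A submonoid $T$ of $X$ is normal if $xT=Tx$ for all $x\in X$. For such $T$, $x\sim_T y$ iff $mx=ny$ for some $m,n\in T$; this is a congruence, $[x]_T$ denotes the class of $x$, and $X/T$ is the set of classes with $[x]_T[y]_T=[xy]_T$, $\lambda\cdot[x]_T=[\lambda\cdot x]_T$, identity $[1_X]_T$. *)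

theory Defs
  imports Main
begin

record ('r, 'x) smonoid =
  carrier :: "'x set"
  mult :: "'x \<Rightarrow> 'x \<Rightarrow> 'x"
  one :: "'x"
  scale :: "'r \<Rightarrow> 'x \<Rightarrow> 'x"

definition scalable_monoid :: "('r::ring_1, 'x) smonoid \<Rightarrow> bool" where
  "scalable_monoid X \<longleftrightarrow>
     (\<forall>x\<in>carrier X. \<forall>y\<in>carrier X. mult X x y \<in> carrier X) \<and>
     one X \<in> carrier X \<and>
     (\<forall>x\<in>carrier X. \<forall>y\<in>carrier X. \<forall>z\<in>carrier X.
        mult X (mult X x y) z = mult X x (mult X y z)) \<and>
     (\<forall>x\<in>carrier X. mult X (one X) x = x \<and> mult X x (one X) = x) \<and>
     (\<forall>a. \<forall>x\<in>carrier X. scale X a x \<in> carrier X) \<and>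
     (\<forall>x\<in>carrier X. scale X 1 x = x) \<and>
     (\<forall>a b. \<forall>x\<in>carrier X. scale X a (scale X b x) = scale X (a * b) x) \<and>
     (\<forall>a. \<forall>x\<in>carrier X. \<forall>y\<in>carrier X.
        scale X a (mult X x y) = mult X (scale X a x) y \<and>
        scale X a (mult X x y) = mult X x (scale X a y))"

definition sim :: "('r::ring_1, 'x) smonoid \<Rightarrow> 'x \<Rightarrow> 'x \<Rightarrow> bool" where
  "sim Y x y \<longleftrightarrow> (\<exists>a b. scale Y a x = scale Y b y)"

definition unit_element :: "('r::ring_1, 'x) smonoid \<Rightarrow> 'x \<Rightarrow> bool" where
  "unit_element Y u \<longleftrightarrow> u \<in> carrier Y \<and>
     (\<forall>x\<in>carrier Y. sim Y x u \<longrightarrow> (\<exists>l. x = scale Y l u)) \<and>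
     (\<forall>l l'. scale Y l u = scale Y l' u \<longrightarrow> l = l')"

definition dense :: "('r::ring_1, 'x) smonoid \<Rightarrow> 'x set \<Rightarrow> bool" where
  "dense Y U \<longleftrightarrow> (\<forall>x\<in>carrier Y. \<exists>u\<in>U. sim Y u x)"

definition sparse :: "('r::ring_1, 'x) smonoid \<Rightarrow> 'x set \<Rightarrow> bool" where
  "sparse Y U \<longleftrightarrow> (\<forall>u\<in>U. \<forall>v\<in>U. sim Y u v \<longrightarrow> u = v)"

definition submonoid :: "('r, 'x) smonoid \<Rightarrow> 'x set \<Rightarrow> bool" where
  "submonoid Y U \<longleftrightarrow> U \<subseteq> carrier Y \<and> one Y \<in> U \<and>
     (\<forall>u\<in>U. \<forall>v\<in>U. mult Y u v \<in> U)"

definition coherent_system :: "('r::ring_1, 'x) smonoid \<Rightarrow> 'x set \<Rightarrow> bool" where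
  "coherent_system Y U \<longleftrightarrow> submonoid Y U \<and> dense Y U \<and> sparse Y U \<and>
     (\<forall>u\<in>U. unit_element Y u)"

definition normal_submonoid :: "('r, 'x) smonoid \<Rightarrow> 'x set \<Rightarrow> bool" where
  "normal_submonoid X T \<longleftrightarrow> submonoid X T \<and>
     (\<forall>x\<in>carrier X. (\<lambda>t. mult X x t) ` T = (\<lambda>t. mult X t x) ` T)"

definition simT :: "('r, 'x) smonoid \<Rightarrow> 'x set \<Rightarrow> 'x \<Rightarrow> 'x \<Rightarrow> bool" where
  "simT X T x y \<longleftrightarrow> (\<exists>m\<in>T. \<exists>n\<in>T. mult X m x = mult X n y)"

definition cls :: "('r, 'x) smonoid \<Rightarrow> 'x set \<Rightarrow> 'x \<Rightarrow> 'x set" where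
  "cls X T x = {y \<in> carrier X. simT X T x y}"

definition quot :: "('r, 'x) smonoid \<Rightarrow> 'x set \<Rightarrow> ('r, 'x set) smonoid" where
  "quot X T = \<lparr> carrier = cls X T ` carrier X,
     mult = (\<lambda>A B. cls X T (mult X (SOME a. a \<in> A) (SOME b. b \<in> B))),
     one = cls X T (one X),
     scale = (\<lambda>l A. cls X T (scale X l (SOME a. a \<in> A))) \<rparr>"

end

theory Submission
  imports Defs
begin

locale qctx =
  fixes X :: "('r::ring_1, 'x) smonoid" and S T :: "'x set"
  assumes sm: "scalable_monoid X"
    and cs: "coherent_system X S"
    and TS: "T \<subseteq> S"
    and nT: "normal_submonoid X T"
begin

abbreviation "C \<equiv> carrier X"
abbreviation "mu \<equiv> mult X"
abbreviation "sc \<equiv> scale X"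

lemma mc: "x \<in> C \<Longrightarrow> y \<in> C \<Longrightarrow> mu x y \<in> C" using sm unfolding scalable_monoid_def by blast
lemma onec: "one X \<in> C" using sm unfolding scalable_monoid_def by blast
lemma assoc: "x \<in> C \<Longrightarrow> y \<in> C \<Longrightarrow> z \<in> C \<Longrightarrow> mu (mu x y) z = mu x (mu y z)"
  using sm unfolding scalable_monoid_def by blast
lemma lid: "x \<in> C \<Longrightarrow> mu (one X) x = x" using sm unfolding scalable_monoid_def by blast
lemma rid: "x \<in> C \<Longrightarrow> mu x (one X) = x" using sm unfolding scalable_monoid_def by blast
lemma scc: "x \<in> C \<Longrightarrow> sc a x \<in> C" using sm unfolding scalable_monoid_def by blast
lemma sc1: "x \<in> C \<Longrightarrow> sc 1 x = x" using sm unfolding scalable_monoid_def by blast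
lemma scsc: "x \<in> C \<Longrightarrow> sc a (sc b x) = sc (a * b) x" using sm unfolding scalable_monoid_def by blast
lemma scl: "x \<in> C \<Longrightarrow> y \<in> C \<Longrightarrow> sc a (mu x y) = mu (sc a x) y" using sm unfolding scalable_monoid_def by blast
lemma scr: "x \<in> C \<Longrightarrow> y \<in> C \<Longrightarrow> sc a (mu x y) = mu x (sc a y)" using sm unfolding scalable_monoid_def by blast

lemma scmid: "x \<in> C \<Longrightarrow> y \<in> C \<Longrightarrow> mu (sc a x) y = mu x (sc a y)" using scl scr by metis

lemma SC: "s \<in> S \<Longrightarrow> s \<in> C" using cs unfolding coherent_system_def submonoid_def by blast
lemma oneS: "one X \<in> S" using cs unfolding coherent_system_def submonoid_def by blast
lemma multS: "s \<in> S \<Longrightarrow> t \<in> S \<Longrightarrow> mu s t \<in> S" using cs unfolding coherent_system_def submonoid_def by blast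
lemma denseS: "x \<in> C \<Longrightarrow> \<exists>u\<in>S. sim X u x" using cs unfolding coherent_system_def dense_def by blast
lemma sparseS: "u \<in> S \<Longrightarrow> v \<in> S \<Longrightarrow> sim X u v \<Longrightarrow> u = v" using cs unfolding coherent_system_def sparse_def by blast
lemma unitS: "u \<in> S \<Longrightarrow> unit_element X u" using cs unfolding coherent_system_def by blast

lemma TC: "t \<in> T \<Longrightarrow> t \<in> C" using nT unfolding normal_submonoid_def submonoid_def by blast
lemma oneT: "one X \<in> T" using nT unfolding normal_submonoid_def submonoid_def by blast
lemma multT: "s \<in> T \<Longrightarrow> t \<in> T \<Longrightarrow> mu s t \<in> T" using nT unfolding normal_submonoid_def submonoid_def by blast
lemma normal: "x \<in> C \<Longrightarrow> t \<in> T \<Longrightarrow> \<exists>p\<in>T. mu x t = mu p x"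
proof -
  assume "x \<in> C" "t \<in> T"
  then have "mu x t \<in> (\<lambda>t. mu t x) ` T" using nT unfolding normal_submonoid_def by blast
  then show ?thesis by auto
qed

lemma simT_refl: "simT X T x x" unfolding simT_def using oneT by blast
lemma simT_sym: "simT X T x y \<Longrightarrow> simT X T y x" unfolding simT_def by metis
lemma simT_trans:
  assumes xc: "x \<in> C" and yc: "y \<in> C" and zc: "z \<in> C" and "simT X T x y" "simT X T y z"
  shows "simT X T x z"
proof -
  obtain m n where m: "m \<in> T" "n \<in> T" "mu m x = mu n y" using assms(4) unfolding simT_def by blast
  obtain m' n' where m': "m' \<in> T" "n' \<in> T" "mu m' y = mu n' z" using assms(5) unfolding simT_def by blast
  obtain p where p: "p \<in> T" "mu m' n = mu p m'" using normal[OF TC[OF m'(1)] m(2)] by blast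
  have "mu (mu m' m) x = mu m' (mu m x)" using assoc TC m m' xc by blast
  also have "\<dots> = mu m' (mu n y)" using m by simp
  also have "\<dots> = mu (mu m' n) y" using assoc TC m m' yc by metis
  also have "\<dots> = mu (mu p m') y" using p by simp
  also have "\<dots> = mu p (mu m' y)" using assoc TC p m' yc by metis
  also have "\<dots> = mu p (mu n' z)" using m' by simp
  also have "\<dots> = mu (mu p n') z" using assoc TC p m' zc by metis
  finally show ?thesis unfolding simT_def using multT m m' p by blast
qed

lemma mem_cls: "x \<in> C \<Longrightarrow> x \<in> cls X T x" unfolding cls_def using simT_refl by blast

lemma cls_eq: assumes "x \<in> C" "y \<in> C" shows "cls X T x = cls X T y \<longleftrightarrow> simT X T x y"
proof
  assume "cls X T x = cls X T y"
  then have "y \<in> cls X T x" using mem_cls assms by blast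
  then show "simT X T x y" unfolding cls_def by blast
next
  assume h: "simT X T x y"
  show "cls X T x = cls X T y"
    unfolding cls_def using h simT_sym simT_trans assms by blast
qed

lemma some_cls: assumes "x \<in> C"
  shows "(SOME a. a \<in> cls X T x) \<in> C \<and> simT X T x (SOME a. a \<in> cls X T x)"
proof -
  have "(SOME a. a \<in> cls X T x) \<in> cls X T x" using mem_cls[OF assms] by (rule someI)
  then show ?thesis unfolding cls_def by blast
qed

lemma simT_multl: assumes "x \<in> C" "x' \<in> C" "y \<in> C" "simT X T x x'"
  shows "simT X T (mu x y) (mu x' y)"
proof -
  obtain m n where m: "m \<in> T" "n \<in> T" "mu m x = mu n x'" using assms(4) unfolding simT_def by blast
  have "mu m (mu x y) = mu n (mu x' y)" using m assoc TC assms by metis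
  then show ?thesis unfolding simT_def using m by blast
qed

lemma simT_multr: assumes "x \<in> C" "y \<in> C" "y' \<in> C" "simT X T y y'"
  shows "simT X T (mu x y) (mu x y')"
proof -
  obtain m n where m: "m \<in> T" "n \<in> T" "mu m y = mu n y'" using assms(4) unfolding simT_def by blast
  obtain p where p: "p \<in> T" "mu x m = mu p x" using normal assms m by blast
  obtain q where q: "q \<in> T" "mu x n = mu q x" using normal assms m by blast
  have "mu p (mu x y) = mu (mu p x) y" using assoc TC p assms by metis
  also have "\<dots> = mu x (mu m y)" using p assoc TC m assms by metis
  also have "\<dots> = mu x (mu n y')" using m by simp
  also have "\<dots> = mu (mu q x) y'" using q assoc TC m assms by metis
  also have "\<dots> = mu q (mu x y')" using assoc TC q assms by metis
  finally show ?thesis unfolding simT_def using p q by blast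
qed

lemma simT_scale: assumes "x \<in> C" "x' \<in> C" "simT X T x x'"
  shows "simT X T (sc a x) (sc a x')"
proof -
  obtain m n where m: "m \<in> T" "n \<in> T" "mu m x = mu n x'" using assms(3) unfolding simT_def by blast
  have "mu m (sc a x) = mu n (sc a x')" using m scl scr TC assms by metis
  then show ?thesis unfolding simT_def using m by blast
qed

lemma quot_carrier: "carrier (quot X T) = cls X T ` C" by (simp add: quot_def)
lemma quot_one: "one (quot X T) = cls X T (one X)" by (simp add: quot_def)

lemma quot_mult: assumes "x \<in> C" "y \<in> C"
  shows "mult (quot X T) (cls X T x) (cls X T y) = cls X T (mu x y)"
proof -
  define a where "a = (SOME a. a \<in> cls X T x)"
  define b where "b = (SOME a. a \<in> cls X T y)"
  have a: "a \<in> C" "simT X T x a" using some_cls[OF assms(1)] a_def by auto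
  have b: "b \<in> C" "simT X T y b" using some_cls[OF assms(2)] b_def by auto
  have "simT X T (mu x y) (mu a y)" using simT_multl a assms by blast
  moreover have "simT X T (mu a y) (mu a b)" using simT_multr a b assms by blast
  ultimately have "simT X T (mu x y) (mu a b)" using simT_trans mc a b assms by blast
  then have "cls X T (mu a b) = cls X T (mu x y)" using cls_eq mc a b assms by metis
  then show ?thesis unfolding quot_def a_def b_def by simp
qed

lemma quot_scale: assumes "x \<in> C"
  shows "scale (quot X T) l (cls X T x) = cls X T (sc l x)"
proof -
  define a where "a = (SOME a. a \<in> cls X T x)"
  have a: "a \<in> C" "simT X T x a" using some_cls[OF assms(1)] a_def by auto
  have "simT X T (sc l x) (sc l a)" using simT_scale a assms by blast
  then have "cls X T (sc l a) = cls X T (sc l x)" using cls_eq scc a assms by metis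
  then show ?thesis unfolding quot_def a_def by simp
qed

lemma part1: "scalable_monoid (quot X T)"
  unfolding scalable_monoid_def quot_carrier quot_one
  by (auto simp: quot_mult quot_scale mc onec assoc lid rid scc sc1 scsc scl scr scmid)

lemma part2: "\<forall>t\<in>T. cls X T t = cls X T (one X)"
proof
  fix t assume t: "t \<in> T"
  have "mu (one X) t = mu t (one X)" using lid rid TC t by simp
  then have "simT X T t (one X)" unfolding simT_def using oneT t by blast
  then show "cls X T t = cls X T (one X)" using cls_eq TC t onec by blast
qed

lemma qsim: assumes "x \<in> C" "y \<in> C" "sim (quot X T) (cls X T x) (cls X T y)"
  shows "\<exists>a b m n. m \<in> T \<and> n \<in> T \<and> sc a (mu m x) = sc b (mu n y)"
proof -
  obtain a b where "scale (quot X T) a (cls X T x) = scale (quot X T) b (cls X T y)"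
    using assms(3) unfolding sim_def by blast
  then have "cls X T (sc a x) = cls X T (sc b y)" using quot_scale assms by simp
  then have "simT X T (sc a x) (sc b y)" using cls_eq scc assms by blast
  then obtain m n where m: "m \<in> T" "n \<in> T" "mu m (sc a x) = mu n (sc b y)" unfolding simT_def by blast
  then have "sc a (mu m x) = sc b (mu n y)" using scr TC assms by metis
  then show ?thesis using m by blast
qed

lemma part3: "coherent_system (quot X T) (cls X T ` S)"
  unfolding coherent_system_def
proof (intro conjI)
  show "submonoid (quot X T) (cls X T ` S)"
    unfolding submonoid_def quot_carrier quot_one
    using SC oneS multS by (auto simp: quot_mult)
  show "dense (quot X T) (cls X T ` S)"
    unfolding dense_def quot_carrier
  proof
    fix A assume "A \<in> cls X T ` C"
    then obtain x where x: "x \<in> C" "A = cls X T x" by blast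
    obtain u where u: "u \<in> S" "sim X u x" using denseS x by blast
    then obtain a b where "sc a u = sc b x" unfolding sim_def by blast
    then have "scale (quot X T) a (cls X T u) = scale (quot X T) b (cls X T x)"
      using quot_scale SC u x by simp
    then show "\<exists>u\<in>cls X T ` S. sim (quot X T) u A" unfolding sim_def using u x by blast
  qed
  show "sparse (quot X T) (cls X T ` S)"
    unfolding sparse_def
  proof (intro ballI impI)
    fix A B assume "A \<in> cls X T ` S" "B \<in> cls X T ` S" and h: "sim (quot X T) A B"
    then obtain s s' where s: "s \<in> S" "s' \<in> S" "A = cls X T s" "B = cls X T s'" by blast
    obtain a b m n where m: "m \<in> T" "n \<in> T" "sc a (mu m s) = sc b (mu n s')"
      using qsim SC s h by blast
    have "mu m s = mu n s'" using sparseS multS TS m s unfolding sim_def by blast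
    then have "simT X T s s'" unfolding simT_def using m by blast
    then show "A = B" using cls_eq SC s by blast
  qed
  show "\<forall>u\<in>cls X T ` S. unit_element (quot X T) u"
  proof
    fix U assume "U \<in> cls X T ` S"
    then obtain s where s: "s \<in> S" "U = cls X T s" by blast
    have sc': "s \<in> C" using SC s by blast
    show "unit_element (quot X T) U"
      unfolding unit_element_def
    proof (intro conjI ballI allI impI)
      show "U \<in> carrier (quot X T)" using s sc' quot_carrier by simp
    next
      fix A assume "A \<in> carrier (quot X T)" and h: "sim (quot X T) A U"
      then obtain x where x: "x \<in> C" "A = cls X T x" using quot_carrier by auto
      obtain a b m n where m: "m \<in> T" "n \<in> T" "sc a (mu m x) = sc b (mu n s)"
        using qsim x s sc' h by blast
      have ns: "mu n s \<in> S" using multS TS m s by blast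
      have "sim X (mu m x) (mu n s)" unfolding sim_def using m by blast
      then obtain l where l: "mu m x = sc l (mu n s)"
        using unitS[OF ns] mc TC m x unfolding unit_element_def by blast
      have "mu m x = mu n (sc l s)" using l scr TC m sc' by metis
      then have "simT X T x (sc l s)" unfolding simT_def using m by blast
      then have "cls X T x = cls X T (sc l s)" using cls_eq x scc sc' by blast
      then show "\<exists>l. A = scale (quot X T) l U" using quot_scale sc' s x by auto
    next
      fix l l' assume "scale (quot X T) l U = scale (quot X T) l' U"
      then have "cls X T (sc l s) = cls X T (sc l' s)" using quot_scale sc' s by simp
      then have "simT X T (sc l s) (sc l' s)" using cls_eq scc sc' by blast
      then obtain m n where m: "m \<in> T" "n \<in> T" "mu m (sc l s) = mu n (sc l' s)"
        unfolding simT_def by blast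
      then have e: "sc l (mu m s) = sc l' (mu n s)" using scr TC sc' by metis
      have ms: "mu m s \<in> S" "mu n s \<in> S" using multS TS m s by blast+
      have "mu m s = mu n s" using sparseS[OF ms] e unfolding sim_def by blast
      then have "sc l (mu m s) = sc l' (mu m s)" using e by simp
      then show "l = l'" using unitS[OF ms(1)] unfolding unit_element_def by blast
    qed
  qed
qed

end

theorem propositionA1:
  fixes X :: "('r::ring_1, 'x) smonoid" and S T :: "'x set"
  assumes "scalable_monoid X"
    and "coherent_system X S"
    and "T \<subseteq> S"
    and "normal_submonoid X T"
  shows "scalable_monoid (quot X T)
    \<and> (\<forall>t\<in>T. cls X T t = cls X T (one X))
    \<and> coherent_system (quot X T) (cls X T ` S)"
proof -
  interpret qctx X S T using assms by unfold_locales
  show ?thesis using part1 part2 part3 by blast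
qed

end
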